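(* Let $d\ge 1$, $\boldsymbol{w}\in\mathbb{R}^d\setminus\{\boldsymbol{0}\}$, $b\in\mathbb{R}$, and let $C(\boldsymbol{x})=\mathbf{1}\{\boldsymbol{w}\cdot\boldsymbol{x}+b>0\}$ be the linear classifier. Let $\boldsymbol{\mu}_0\in\mathbb{R}^d$ be a unit vector, with sign chosen so that $\boldsymbol{w}\cdot\boldsymbol{\mu}_0\ge 0$. Let $\varepsilon>0$, $\delta\ge 0$. Put $\boldsymbol{v}_0=\boldsymbol{w}/\|\boldsymbol{w}\|$, let $\theta\in[0,\pi/2]$ be the angle with $\cos\theta=\boldsymbol{v}_0\cdot\boldsymbol{\mu}_0$, let $\boldsymbol{n}_0=\boldsymbol{n}/\|\boldsymbol{n}\|$ with $\boldsymbol{n}=\boldsymbol{v}_0-(\boldsymbol{v}_0\cdot\boldsymbol{\mu}_0)\boldsymbol{\mu}_0$ (if $\boldsymbol{n}=\boldsymbol{0}$, let $\boldsymbol{n}_0$ be any unit vector orthogonal to $\boldsymbol{\mu}_0$), so that $\boldsymbol{v}_0=\cos\theta\,\boldsymbol{\mu}_0+\sin\theta\,\boldsymbol{n}_0$. Let $\beta=\min(\varepsilon\cos\theta,\delta)$ and $\boldsymbol{u}_2=\beta\boldsymbol{\mu}_0+\sqrt{\varepsilon^2-\beta^2}\,\boldsymbol{n}_0$. Then $$\Omega_\varepsilon=\Omega(\varepsilon\boldsymbol{v}_0)\cup\Omega(-\varepsilon\boldsymbol{v}_0),\qquad \Omega_{\varepsilon,\delta}=\Omega(\boldsymbol{u}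_2)\cup\Omega(-\boldsymbol{u}_2).$$
   Context: All norms are Euclidean ($\ell_2$). For $\boldsymbol{v}\in\mathbb{R}^d$, $\Omega(\boldsymbol{v})=\{\boldsymbol{x}\in\mathbb{R}^d: C(\boldsymbol{x}+\boldsymbol{v})\neq C(\boldsymbol{x})\}$. A point $\boldsymbol{x}'$ is an $\varepsilon$-adversarial example of $\boldsymbol{x}$ if $\|\boldsymbol{x}-\boldsymbol{x}'\|\le\varepsilon$ and $C(\boldsymbol{x})\ne C(\boldsymbol{x}')$; it is an $(\varepsilon,\delta)$-strong-adversarial example of $\boldsymbol{x}$ if moreover $|(\boldsymbol{x}-\boldsymbol{x}')\cdot\boldsymbol{\mu}_0|\le\delta$. $\Omega_\varepsilon$ is the set of $\boldsymbol{x}$ having an $\varepsilon$-adversarial example and $\Omega_{\varepsilon,\delta}$ the set of $\boldsymbol{x}$ having an $(\varepsilon,\delta)$-strong-adversarial example. ($\boldsymbol{\mu}_0$ plays the role of the "signal direction"; since the strong-adversarial condition is invariant under $\boldsymbol{\mu}_0\mapsto-\boldsymbol{\mu}_0$, its sign is fixed so that the angle $\theta$ lies in $[0,\pi/2]$.) *)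

theory Defs
  imports "HOL-Analysis.Analysis"
begin

definition lin_clf :: "'a::euclidean_space \<Rightarrow> real \<Rightarrow> 'a \<Rightarrow> bool" where
  "lin_clf w b x = (w \<bullet> x + b > 0)"

definition Omega :: "('a::euclidean_space \<Rightarrow> bool) \<Rightarrow> 'a \<Rightarrow> 'a set" where
  "Omega C v = {x. C (x + v) \<noteq> C x}"

definition adv_example :: "('a::euclidean_space \<Rightarrow> bool) \<Rightarrow> real \<Rightarrow> 'a \<Rightarrow> 'a \<Rightarrow> bool" where
  "adv_example C \<epsilon> x x' \<longleftrightarrow> norm (x - x') \<le> \<epsilon> \<and> C x \<noteq> C x'"

definition strong_adv_example ::
  "('a::euclidean_space \<Rightarrow> bool) \<Rightarrow> 'a \<Rightarrow> real \<Rightarrow> real \<Rightarrow> 'a \<Rightarrow> 'a \<Rightarrow> bool" where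
  "strong_adv_example C \<mu>0 \<epsilon> \<delta> x x' \<longleftrightarrow>
     adv_example C \<epsilon> x x' \<and> \<bar>(x - x') \<bullet> \<mu>0\<bar> \<le> \<delta>"

definition Omega_eps :: "('a::euclidean_space \<Rightarrow> bool) \<Rightarrow> real \<Rightarrow> 'a set" where
  "Omega_eps C \<epsilon> = {x. \<exists>x'. adv_example C \<epsilon> x x'}"

definition Omega_eps_delta ::
  "('a::euclidean_space \<Rightarrow> bool) \<Rightarrow> 'a \<Rightarrow> real \<Rightarrow> real \<Rightarrow> 'a set" where
  "Omega_eps_delta C \<mu>0 \<epsilon> \<delta> = {x. \<exists>x'. strong_adv_example C \<mu>0 \<epsilon> \<delta> x x'}"

end

theory Submission
  imports Defs
begin

lemma key:
  fixes w u :: "'a::euclidean_space" and D :: "'a set"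
  assumes "u \<in> D" "-u \<in> D" "\<And>d. d \<in> D \<Longrightarrow> w \<bullet> d \<le> w \<bullet> u \<and> - (w \<bullet> d) \<le> w \<bullet> u"
  shows "{x. \<exists>d\<in>D. lin_clf w b (x + d) \<noteq> lin_clf w b x} =
         Omega (lin_clf w b) u \<union> Omega (lin_clf w b) (-u)"
proof (intro set_eqI iffI)
  fix x assume "x \<in> {x. \<exists>d\<in>D. lin_clf w b (x + d) \<noteq> lin_clf w b x}"
  then obtain d where d: "d \<in> D" "lin_clf w b (x + d) \<noteq> lin_clf w b x" by auto
  have h: "w \<bullet> d \<le> w \<bullet> u" "- (w \<bullet> d) \<le> w \<bullet> u" using assms(3)[OF d(1)] by auto
  have e1: "w \<bullet> (x + d) = w \<bullet> x + w \<bullet> d" "w \<bullet> (x + u) = w \<bullet> x + w \<bullet> u"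
    "w \<bullet> (x + - u) = w \<bullet> x - w \<bullet> u" by (simp_all add: inner_add_right inner_diff_right)
  have "lin_clf w b (x + u) \<noteq> lin_clf w b x \<or> lin_clf w b (x + - u) \<noteq> lin_clf w b x"
    using d(2) h unfolding lin_clf_def e1 by linarith
  then show "x \<in> Omega (lin_clf w b) u \<union> Omega (lin_clf w b) (-u)"
    unfolding Omega_def by blast
next
  fix x assume "x \<in> Omega (lin_clf w b) u \<union> Omega (lin_clf w b) (-u)"
  then have "lin_clf w b (x + u) \<noteq> lin_clf w b x \<or> lin_clf w b (x + - u) \<noteq> lin_clf w b x"
    unfolding Omega_def by blast
  then show "x \<in> {x. \<exists>d\<in>D. lin_clf w b (x + d) \<noteq> lin_clf w b x}"
    using assms(1,2) by blast
qed

lemma ineq: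
  fixes c s a t \<epsilon> \<delta> :: real
  assumes "c \<ge> 0" "s \<ge> 0" "c\<^sup>2 + s\<^sup>2 = 1" "\<epsilon> > 0" "\<delta> \<ge> 0" "a\<^sup>2 + t\<^sup>2 \<le> \<epsilon>\<^sup>2" "\<bar>a\<bar> \<le> \<delta>"
  shows "c * a + s * t \<le> c * min (\<epsilon> * c) \<delta> + s * sqrt (\<epsilon>\<^sup>2 - (min (\<epsilon> * c) \<delta>)\<^sup>2)"
proof -
  have s2: "1 - c^2 = s^2" using assms(3) by simp
  show ?thesis
proof (cases "\<epsilon> * c \<le> \<delta>")
  case True
  have e: "\<epsilon>^2 - (\<epsilon> * c)^2 = (\<epsilon> * s)^2"
    by (simp add: power_mult_distrib s2[symmetric] algebra_simps)
  have "sqrt (\<epsilon>^2 - (\<epsilon> * c)^2) = \<epsilon> * s" unfolding e using assms by simp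
  then have R: "c * min (\<epsilon> * c) \<delta> + s * sqrt (\<epsilon>^2 - (min (\<epsilon> * c) \<delta>)^2) = \<epsilon>"
  proof -
    have cs1: "c * c + s * s = 1" using assms(3) by (simp add: power2_eq_square)
    have "c * min (\<epsilon> * c) \<delta> + s * sqrt (\<epsilon>^2 - (min (\<epsilon> * c) \<delta>)^2) = c * (\<epsilon> * c) + s * (\<epsilon> * s)"
      using True \<open>sqrt (\<epsilon>^2 - (\<epsilon> * c)^2) = \<epsilon> * s\<close> by (simp add: min_def)
    also have "\<dots> = \<epsilon> * (c * c + s * s)" by (simp add: algebra_simps)
    finally show ?thesis using cs1 by simp
  qed
  have id: "(c * a + s * t)^2 + (c * t - s * a)^2 = (c^2 + s^2) * (a^2 + t^2)"
    by (simp add: algebra_simps power2_eq_square)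
  have "(c * a + s * t)^2 \<le> \<epsilon>^2" 
  proof -
    have i2: "(c * a + s * t)^2 + (c * t - s * a)^2 = a^2 + t^2" using id assms(3) by simp
    have "0 \<le> (c * t - s * a)^2" by simp
    then show ?thesis using i2 assms(6) by linarith
  qed
  then have "c * a + s * t \<le> \<epsilon>" using assms(4) power2_le_imp_le by (metis less_imp_le)
  then show ?thesis using R by simp
next
  case False
  define T where "T = sqrt (\<epsilon>^2 - \<delta>^2)"
  have "c \<le> 1" using s2 assms(1) by (metis abs_le_D1 abs_square_le_1 diff_ge_0_iff_ge zero_le_power2)
  then have "\<epsilon> * c \<le> \<epsilon>" using assms(4) by (simp add: mult_left_le)
  then have dle: "\<delta> < \<epsilon>" using False by simp
  have T2: "T^2 = \<epsilon>^2 - \<delta>^2" unfolding T_def using dle assms(5)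
    by (simp add: power_mono)
  have Tpos: "T > 0" unfolding T_def using dle assms(5)
    by (simp add: power_strict_mono)
  have "(\<epsilon> * c)^2 > \<delta>^2" using False assms(5) by (simp add: power_strict_mono)
  then have "T^2 \<ge> (\<epsilon> * s)^2" using T2 s2
    by (simp add: power_mult_distrib algebra_simps flip: s2)
  then have Tes: "T \<ge> \<epsilon> * s" using Tpos by (meson power2_le_imp_le less_imp_le)
  have mu: "c * T - s * \<delta> \<ge> 0"
  proof -
    have "c * T \<ge> c * (\<epsilon> * s)" using Tes assms(1) by (simp add: mult_left_mono)
    moreover have "c * (\<epsilon> * s) \<ge> s * \<delta>" using mult_left_mono[of \<delta> "\<epsilon> * c" s] False assms(2) by (simp add: algebra_simps)
    ultimately show ?thesis by simp
  qed
  have cs: "2 * (\<delta> * a + T * t) \<le> 2 * \<epsilon>^2"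
  proof -
    have "0 \<le> (\<delta> - a)^2 + (T - t)^2" by simp
    then show ?thesis using T2 assms(6) by (simp add: power2_eq_square algebra_simps)
  qed
  have "T * (c * a + s * t) = s * (\<delta> * a + T * t) + (c * T - s * \<delta>) * a" by (simp add: algebra_simps)
  also have "\<dots> \<le> s * \<epsilon>^2 + (c * T - s * \<delta>) * \<delta>"
    using cs mu assms(2,7) by (intro add_mono mult_left_mono mult_mono) auto
  also have "\<dots> = s * (T^2 + \<delta>^2) + (c * T - s * \<delta>) * \<delta>" using T2 by simp
  also have "\<dots> = T * (c * \<delta> + s * T)" by (simp add: algebra_simps power2_eq_square)
  finally have "c * a + s * t \<le> c * \<delta> + s * T" using Tpos by simp
  then show ?thesis using False by (simp add: T_def min_def)
qed
qed

lemma eps_eq: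
  "Omega_eps C \<epsilon> = {x. \<exists>d\<in>{d. norm d \<le> \<epsilon>}. C (x + d) \<noteq> C x}"
proof (intro set_eqI iffI)
  fix x assume "x \<in> Omega_eps C \<epsilon>"
  then obtain x' where h: "norm (x - x') \<le> \<epsilon>" "C x \<noteq> C x'"
    unfolding Omega_eps_def adv_example_def by blast
  have "x + (x' - x) = x'" by simp
  moreover have "norm (x' - x) \<le> \<epsilon>" using h(1) by (simp add: norm_minus_commute)
  ultimately show "x \<in> {x. \<exists>d\<in>{d. norm d \<le> \<epsilon>}. C (x + d) \<noteq> C x}"
    using h(2) by (intro CollectI bexI[where x="x' - x"]) auto
next
  fix x assume "x \<in> {x. \<exists>d\<in>{d. norm d \<le> \<epsilon>}. C (x + d) \<noteq> C x}"
  then obtain d where h: "norm d \<le> \<epsilon>" "C (x + d) \<noteq> C x" by blast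
  have "norm (x - (x + d)) = norm d" by (simp add: norm_minus_commute)
  then have "adv_example C \<epsilon> x (x + d)" using h unfolding adv_example_def by auto
  then show "x \<in> Omega_eps C \<epsilon>" unfolding Omega_eps_def by blast
qed

lemma eps_delta_eq:
  "Omega_eps_delta C \<mu>0 \<epsilon> \<delta> = {x. \<exists>d\<in>{d. norm d \<le> \<epsilon> \<and> \<bar>d \<bullet> \<mu>0\<bar> \<le> \<delta>}. C (x + d) \<noteq> C x}"
proof (intro set_eqI iffI)
  fix x assume "x \<in> Omega_eps_delta C \<mu>0 \<epsilon> \<delta>"
  then obtain x' where h: "norm (x - x') \<le> \<epsilon>" "C x \<noteq> C x'" "\<bar>(x - x') \<bullet> \<mu>0\<bar> \<le> \<delta>"
    unfolding Omega_eps_delta_def strong_adv_example_def adv_example_def by blast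
  have "x + (x' - x) = x'" by simp
  moreover have "norm (x' - x) \<le> \<epsilon>" using h(1) by (simp add: norm_minus_commute)
  moreover have "\<bar>(x' - x) \<bullet> \<mu>0\<bar> \<le> \<delta>" using h(3)
    by (metis abs_minus_cancel inner_minus_left minus_diff_eq)
  ultimately show "x \<in> {x. \<exists>d\<in>{d. norm d \<le> \<epsilon> \<and> \<bar>d \<bullet> \<mu>0\<bar> \<le> \<delta>}. C (x + d) \<noteq> C x}"
    using h(2) by (intro CollectI bexI[where x="x' - x"]) auto
next
  fix x assume "x \<in> {x. \<exists>d\<in>{d. norm d \<le> \<epsilon> \<and> \<bar>d \<bullet> \<mu>0\<bar> \<le> \<delta>}. C (x + d) \<noteq> C x}"
  then obtain d where h: "norm d \<le> \<epsilon>" "\<bar>d \<bullet> \<mu>0\<bar> \<le> \<delta>" "C (x + d) \<noteq> C x" by blast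
  have "norm (x - (x + d)) = norm d" by (simp add: norm_minus_commute)
  moreover have "\<bar>(x - (x + d)) \<bullet> \<mu>0\<bar> = \<bar>d \<bullet> \<mu>0\<bar>" by (simp add: inner_minus_left)
  ultimately have "strong_adv_example C \<mu>0 \<epsilon> \<delta> x (x + d)" using h
    unfolding strong_adv_example_def adv_example_def by auto
  then show "x \<in> Omega_eps_delta C \<mu>0 \<epsilon> \<delta>" unfolding Omega_eps_delta_def by blast
qed

lemma bessel:
  fixes d p q :: "'a::euclidean_space"
  assumes "norm p = 1" "norm q = 1" "p \<bullet> q = 0"
  shows "(d \<bullet> p)^2 + (d \<bullet> q)^2 \<le> (norm d)^2"
proof -
  define a where "a = d \<bullet> p"
  define t where "t = d \<bullet> q"
  define r where "r = a *\<^sub>R p + t *\<^sub>R q"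
  have pp: "p \<bullet> p = 1" using assms(1) by (simp add: norm_eq_1)
  have qq: "q \<bullet> q = 1" using assms(2) by (simp add: norm_eq_1)
  have qp: "q \<bullet> p = 0" using assms(3) by (simp add: inner_commute)
  have dr: "d \<bullet> r = a^2 + t^2" unfolding r_def a_def t_def
    by (simp add: inner_add_right power2_eq_square)
  have rr: "r \<bullet> r = a^2 + t^2" unfolding r_def
    by (simp add: inner_add_right inner_add_left pp qq qp assms(3) power2_eq_square)
  have "0 \<le> (d - r) \<bullet> (d - r)" by simp
  also have "\<dots> = d \<bullet> d - 2 * (d \<bullet> r) + r \<bullet> r"
    by (simp add: inner_diff_left inner_diff_right inner_commute)
  finally show ?thesis using dr rr unfolding a_def t_def by (simp add: power2_norm_eq_inner)
qed

theorem lemma1: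
  fixes w \<mu>0 n0 :: "'a::euclidean_space" and b \<epsilon> \<delta> :: real
  defines "v0 \<equiv> w /\<^sub>R norm w"
  defines "\<theta> \<equiv> arccos (v0 \<bullet> \<mu>0)"
  defines "n \<equiv> v0 - (v0 \<bullet> \<mu>0) *\<^sub>R \<mu>0"
  defines "\<beta> \<equiv> min (\<epsilon> * cos \<theta>) \<delta>"
  defines "u2 \<equiv> \<beta> *\<^sub>R \<mu>0 + sqrt (\<epsilon>\<^sup>2 - \<beta>\<^sup>2) *\<^sub>R n0"
  assumes "w \<noteq> 0"
    and "norm \<mu>0 = 1"
    and "w \<bullet> \<mu>0 \<ge> 0"
    and "\<epsilon> > 0" and "\<delta> \<ge> 0"
    and "n \<noteq> 0 \<Longrightarrow> n0 = n /\<^sub>R norm n"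
    and "n = 0 \<Longrightarrow> norm n0 = 1 \<and> n0 \<bullet> \<mu>0 = 0"
  shows "Omega_eps (lin_clf w b) \<epsilon> =
           Omega (lin_clf w b) (\<epsilon> *\<^sub>R v0) \<union> Omega (lin_clf w b) (- (\<epsilon> *\<^sub>R v0))
       \<and> Omega_eps_delta (lin_clf w b) \<mu>0 \<epsilon> \<delta> =
           Omega (lin_clf w b) u2 \<union> Omega (lin_clf w b) (- u2)"
proof
  define c where "c = v0 \<bullet> \<mu>0"
  define s where "s = norm n"
  have nw: "norm w > 0" using assms(6) by simp
  have wv: "w = norm w *\<^sub>R v0" unfolding v0_def using nw by simp
  have v1: "norm v0 = 1" unfolding v0_def using nw by simp
  have vv: "v0 \<bullet> v0 = 1" using v1 by (simp add: norm_eq_1)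
  have mm: "\<mu>0 \<bullet> \<mu>0 = 1" using assms(7) by (simp add: norm_eq_1)
  have wd: "w \<bullet> d = norm w * (v0 \<bullet> d)" for d by (subst wv) simp
  have "\<bar>c\<bar> \<le> 1" unfolding c_def using Cauchy_Schwarz_ineq2[of v0 \<mu>0] v1 assms(7) by simp
  have c0: "c \<ge> 0" unfolding c_def using wd[of \<mu>0] assms(8) nw
    by (simp add: zero_le_mult_iff)
  have cos: "cos \<theta> = c" unfolding \<theta>_def c_def[symmetric]
    using \<open>\<bar>c\<bar> \<le> 1\<close> by (simp add: cos_arccos_abs)
  have nm: "n \<bullet> \<mu>0 = 0" unfolding n_def using mm by (simp add: inner_diff_left c_def[symmetric])
  have "s^2 = n \<bullet> n" unfolding s_def by (simp add: power2_norm_eq_inner)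
  also have "\<dots> = 1 - c^2" unfolding n_def c_def
    by (simp add: inner_diff_left inner_diff_right vv mm inner_commute power2_eq_square)
  finally have s2: "s^2 = 1 - c^2" .
  have s0: "s \<ge> 0" unfolding s_def by simp
  have nsn: "n = s *\<^sub>R n0 \<and> norm n0 = 1 \<and> n0 \<bullet> \<mu>0 = 0"
  proof (cases "n = 0")
    case True then show ?thesis using assms(12) s_def by simp
  next
    case False
    then have "n0 = n /\<^sub>R s" using assms(11) s_def by simp
    then show ?thesis using False nm unfolding s_def by simp
  qed
  have vdec: "v0 = c *\<^sub>R \<mu>0 + s *\<^sub>R n0" using nsn unfolding n_def c_def by (metis diff_add_cancel add.commute)
  have vd: "v0 \<bullet> d = c * (d \<bullet> \<mu>0) + s * (d \<bullet> n0)" for d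
    by (subst vdec) (simp add: inner_add_left inner_commute[of \<mu>0 d] inner_commute[of n0 d])
  have bes: "(d \<bullet> \<mu>0)^2 + (d \<bullet> n0)^2 \<le> (norm d)^2" for d
    using bessel[of \<mu>0 n0 d] assms(7) nsn by (simp add: inner_commute)
  show "Omega_eps (lin_clf w b) \<epsilon> =
           Omega (lin_clf w b) (\<epsilon> *\<^sub>R v0) \<union> Omega (lin_clf w b) (- (\<epsilon> *\<^sub>R v0))"
    unfolding eps_eq
  proof (rule key)
    show "\<epsilon> *\<^sub>R v0 \<in> {d. norm d \<le> \<epsilon>}" "- (\<epsilon> *\<^sub>R v0) \<in> {d. norm d \<le> \<epsilon>}"
      using v1 assms(9) by auto
    fix d :: 'a assume "d \<in> {d. norm d \<le> \<epsilon>}"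
    then have "norm d \<le> \<epsilon>" by simp
    have "\<bar>w \<bullet> d\<bar> \<le> norm w * norm d" by (rule Cauchy_Schwarz_ineq2)
    also have "\<dots> \<le> norm w * \<epsilon>" using \<open>norm d \<le> \<epsilon>\<close> nw by simp
    also have "\<dots> = w \<bullet> (\<epsilon> *\<^sub>R v0)" using wd[of v0] vv by simp
    finally show "w \<bullet> d \<le> w \<bullet> (\<epsilon> *\<^sub>R v0) \<and> - (w \<bullet> d) \<le> w \<bullet> (\<epsilon> *\<^sub>R v0)" by linarith
  qed
  have cs: "c^2 + s^2 = 1" using s2 by simp
  have \<beta>c: "\<beta> = min (\<epsilon> * c) \<delta>" unfolding \<beta>_def cos ..
  have "c \<le> 1" using \<open>\<bar>c\<bar> \<le> 1\<close> by simp
  have b0: "0 \<le> \<beta>" using c0 assms(9,10) \<beta>c by simp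
  have bd: "\<beta> \<le> \<delta>" using \<beta>c by simp
  have be: "\<beta> \<le> \<epsilon>" using \<beta>c \<open>c \<le> 1\<close> assms(9) mult_left_le[of c \<epsilon>] by linarith
  have bsq: "\<beta>^2 \<le> \<epsilon>^2" using b0 be by (simp add: power_mono)
  define r where "r = sqrt (\<epsilon>^2 - \<beta>^2)"
  have r2: "r^2 = \<epsilon>^2 - \<beta>^2" unfolding r_def using bsq by simp
  have u2d: "u2 = \<beta> *\<^sub>R \<mu>0 + r *\<^sub>R n0" unfolding u2_def r_def ..
  have nn: "n0 \<bullet> n0 = 1" using nsn by (simp add: norm_eq_1)
  have n0m: "n0 \<bullet> \<mu>0 = 0" "\<mu>0 \<bullet> n0 = 0" using nsn by (simp_all add: inner_commute)
  have u2m: "u2 \<bullet> \<mu>0 = \<beta>" unfolding u2d using mm n0m by (simp add: inner_add_left)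
  have u2n: "u2 \<bullet> n0 = r" unfolding u2d using nn n0m by (simp add: inner_add_left)
  have "(norm u2)^2 = u2 \<bullet> u2" by (simp add: power2_norm_eq_inner)
  also have "\<dots> = \<beta> * \<beta> + r * r" unfolding u2d using mm nn n0m
    by (simp add: inner_add_left inner_add_right)
  also have "\<dots> = \<epsilon>^2" using r2 by (simp add: power2_eq_square)
  finally have "norm u2 = \<epsilon>" using assms(9) by (simp add: power2_eq_iff_nonneg)
  have wu2: "w \<bullet> u2 = norm w * (c * \<beta> + s * r)" using wd vd u2m u2n by simp
  show "Omega_eps_delta (lin_clf w b) \<mu>0 \<epsilon> \<delta> =
           Omega (lin_clf w b) u2 \<union> Omega (lin_clf w b) (- u2)"
    unfolding eps_delta_eq
  proof (rule key)
    show "u2 \<in> {d. norm d \<le> \<epsilon> \<and> \<bar>d \<bullet> \<mu>0\<bar> \<le> \<delta>}" "- u2 \<in> {d. norm d \<le> \<epsilon> \<and> \<bar>d \<bullet> \<mu>0\<bar> \<le> \<delta>}"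
      using \<open>norm u2 = \<epsilon>\<close> u2m b0 bd by auto
    fix d :: 'a assume "d \<in> {d. norm d \<le> \<epsilon> \<and> \<bar>d \<bullet> \<mu>0\<bar> \<le> \<delta>}"
    then have dn: "norm d \<le> \<epsilon>" and dm: "\<bar>d \<bullet> \<mu>0\<bar> \<le> \<delta>" by auto
    have "(norm d)^2 \<le> \<epsilon>^2" using dn by (simp add: power_mono)
    then have at: "(d \<bullet> \<mu>0)^2 + (d \<bullet> n0)^2 \<le> \<epsilon>^2" using bes[of d] by linarith
    have i1: "c * (d \<bullet> \<mu>0) + s * (d \<bullet> n0) \<le> c * \<beta> + s * r"
      using ineq[OF c0 s0 cs assms(9,10) at dm] unfolding \<beta>c r_def by simp
    have at2: "(- (d \<bullet> \<mu>0))^2 + (- (d \<bullet> n0))^2 \<le> \<epsilon>^2" using at by simp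
    have dm2: "\<bar>- (d \<bullet> \<mu>0)\<bar> \<le> \<delta>" using dm by simp
    have i2: "c * (- (d \<bullet> \<mu>0)) + s * (- (d \<bullet> n0)) \<le> c * \<beta> + s * r"
      using ineq[OF c0 s0 cs assms(9,10) at2 dm2] unfolding \<beta>c r_def by simp
    show "w \<bullet> d \<le> w \<bullet> u2 \<and> - (w \<bullet> d) \<le> w \<bullet> u2"
    proof -
      have e: "w \<bullet> d = norm w * (c * (d \<bullet> \<mu>0) + s * (d \<bullet> n0))" using wd vd by simp
      have m1: "norm w * (c * (d \<bullet> \<mu>0) + s * (d \<bullet> n0)) \<le> norm w * (c * \<beta> + s * r)"
        using i1 nw by (intro mult_left_mono) auto
      have m2: "norm w * (c * (- (d \<bullet> \<mu>0)) + s * (- (d \<bullet> n0))) \<le> norm w * (c * \<beta> + s * r)"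
        using i2 nw by (intro mult_left_mono) auto
      show ?thesis using m1 m2 unfolding e wu2 by (simp add: algebra_simps)
    qed
  qed
qed

end
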